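(* In the setting of the context, suppose $G_2$ is a $p$-group and $S$ is a simple $KH_1$-module with $H_1^2=H_1$. Then $G_2'=H_2$ and $G_1''=G_1$.
   Context: $K$ is algebraically closed of characteristic zero; $G_2$ is a finite group with normal subgroups $G_1$, $H_2$, and $H_1=G_1\cap H_2$, all normal in $G_2$, with $G_2=G_1H_2$ and $[G_2:G_1]=[H_2:H_1]=p$. For a normal subgroup $N$ of a group $X$, an $N$-module $W$ and $x\in X$, ${}^xW$ is $W$ with action $n\cdot w=(x^{-1}nx)w$, and $I_X(W)=\{x\in X:{}^xW\cong W\}$. For a simple $KH_1$-module $S$: $H_1^2=I_{G_2}(S)$. When $H_1^2=H_1$, the modules $T=\operatorname{Ind}_{H_1}^{H_2}S$ (the $KH_2$-module $KH_2S$) and $T'=\operatorname{Ind}_{H_1}^{G_1}S$ (the $KG_1$-module $KG_1S$) are simple, and the decomposition groups are $G_2'=I_{G_2}(T)$ and $G_1''=I_{G_2}(T')$. *)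

theory Defs
  imports "Jordan_Normal_Form.Matrix" "HOL-Algebra.Coset"
    "HOL-Computational_Algebra.Polynomial"
begin

text \<open>Finite-dimensional matrix representations of a subgroup N of a group G over a
field of scalars 'k.  A KN-module of dimension n is given by a homomorphism
N -> GL_n('k), represented by n x n matrices.\<close>

definition is_rep :: "('g,'b) monoid_scheme \<Rightarrow> 'g set \<Rightarrow> nat \<Rightarrow> ('g \<Rightarrow> 'k::field mat) \<Rightarrow> bool" where
  "is_rep G N n \<rho> \<longleftrightarrow>
     (\<forall>g\<in>N. \<rho> g \<in> carrier_mat n n) \<and> \<rho> \<one>\<^bsub>G\<^esub> = 1\<^sub>m n \<and>
     (\<forall>g\<in>N. \<forall>h\<in>N. \<rho> (g \<otimes>\<^bsub>G\<^esub> h) = \<rho> g * \<rho> h)"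

definition invariant_subspace :: "'g set \<Rightarrow> nat \<Rightarrow> ('g \<Rightarrow> 'k::field mat) \<Rightarrow> 'k vec set \<Rightarrow> bool" where
  "invariant_subspace N n \<rho> W \<longleftrightarrow>
     W \<subseteq> carrier_vec n \<and> 0\<^sub>v n \<in> W \<and>
     (\<forall>v\<in>W. \<forall>w\<in>W. v + w \<in> W) \<and> (\<forall>c. \<forall>v\<in>W. c \<cdot>\<^sub>v v \<in> W) \<and>
     (\<forall>g\<in>N. \<forall>v\<in>W. \<rho> g *\<^sub>v v \<in> W)"

definition simple_rep :: "('g,'b) monoid_scheme \<Rightarrow> 'g set \<Rightarrow> nat \<Rightarrow> ('g \<Rightarrow> 'k::field mat) \<Rightarrow> bool" where
  "simple_rep G N n \<rho> \<longleftrightarrow> is_rep G N n \<rho> \<and> n > 0 \<and>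
     (\<forall>W. invariant_subspace N n \<rho> W \<longrightarrow> W = {0\<^sub>v n} \<or> W = carrier_vec n)"

definition rep_iso :: "'g set \<Rightarrow> nat \<Rightarrow> ('g \<Rightarrow> 'k::field mat) \<Rightarrow> ('g \<Rightarrow> 'k mat) \<Rightarrow> bool" where
  "rep_iso N n \<rho> \<sigma> \<longleftrightarrow>
     (\<exists>P \<in> carrier_mat n n. invertible_mat P \<and> (\<forall>g\<in>N. P * \<rho> g = \<sigma> g * P))"

definition conj_rep :: "('g,'b) monoid_scheme \<Rightarrow> 'g \<Rightarrow> ('g \<Rightarrow> 'k mat) \<Rightarrow> ('g \<Rightarrow> 'k mat)" where
  "conj_rep G x \<rho> = (\<lambda>h. \<rho> (inv\<^bsub>G\<^esub> x \<otimes>\<^bsub>G\<^esub> h \<otimes>\<^bsub>G\<^esub> x))"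

definition inertia :: "('g,'b) monoid_scheme \<Rightarrow> 'g set \<Rightarrow> nat \<Rightarrow> ('g \<Rightarrow> 'k::field mat) \<Rightarrow> 'g set" where
  "inertia G N n \<rho> = {x \<in> carrier G. rep_iso N n (conj_rep G x \<rho>) \<rho>}"

definition left_transversal :: "('g,'b) monoid_scheme \<Rightarrow> 'g set \<Rightarrow> 'g set \<Rightarrow> 'g list \<Rightarrow> bool" where
  "left_transversal G K H ts \<longleftrightarrow> set ts \<subseteq> K \<and>
     (\<forall>k\<in>K. \<exists>!i. i < length ts \<and> inv\<^bsub>G\<^esub> (ts ! i) \<otimes>\<^bsub>G\<^esub> k \<in> H)"

definition chosen_transversal :: "('g,'b) monoid_scheme \<Rightarrow> 'g set \<Rightarrow> 'g set \<Rightarrow> 'g list" where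
  "chosen_transversal G K H = (SOME ts. left_transversal G K H ts)"

text \<open>Induced representation Ind_H^K, in the standard block-matrix form:
block (i,j) of Ind(g) is rho(t_i^{-1} g t_j) if this lies in H and 0 otherwise.\<close>
definition ind_dim :: "('g,'b) monoid_scheme \<Rightarrow> 'g set \<Rightarrow> 'g set \<Rightarrow> nat \<Rightarrow> nat" where
  "ind_dim G K H n = length (chosen_transversal G K H) * n"

definition ind_rep :: "('g,'b) monoid_scheme \<Rightarrow> 'g set \<Rightarrow> 'g set \<Rightarrow> nat \<Rightarrow> ('g \<Rightarrow> 'k::field mat) \<Rightarrow> ('g \<Rightarrow> 'k mat)" where
  "ind_rep G K H n \<rho> = (\<lambda>g. let ts = chosen_transversal G K H; d = length ts * n in
     mat d d (\<lambda>(r, c). let x = inv\<^bsub>G\<^esub> (ts ! (r div n)) \<otimes>\<^bsub>G\<^esub> g \<otimes>\<^bsub>G\<^esub> (ts ! (c div n))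
                     in if x \<in> H then \<rho> x $$ (r mod n, c mod n) else 0))"

end

theory Submission
  imports Defs "Jordan_Normal_Form.Determinant"
begin


lemma ex_transversal:
  fixes G (structure)
  assumes grp: "group G" and sg: "subgroup H G" and KG: "K \<subseteq> carrier G" and fin: "finite K"
  shows "\<exists>ts. left_transversal G K H ts"
proof -
  interpret group G by (rule grp)
  define R where "R = (\<lambda>x y. inv x \<otimes> y \<in> H)"
  have refl: "R x x" if "x \<in> carrier G" for x
    using that sg unfolding R_def by (simp add: subgroup.one_closed)
  have sym: "R y x" if "R x y" "x \<in> carrier G" "y \<in> carrier G" for x y
  proof -
    have "inv (inv x \<otimes> y) \<in> H" using that sg unfolding R_def by (simp add: subgroup.m_inv_closed)
    thus ?thesis using that unfolding R_def by (simp add: inv_mult_group)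
  qed
  have trans: "R x z" if "R x y" "R y z" "x \<in> carrier G" "y \<in> carrier G" "z \<in> carrier G" for x y z
  proof -
    have "(inv x \<otimes> y) \<otimes> (inv y \<otimes> z) \<in> H" using that sg unfolding R_def by (simp add: subgroup.m_closed)
    also have "(inv x \<otimes> y) \<otimes> (inv y \<otimes> z) = inv x \<otimes> z" using that
      by (metis inv_closed m_assoc m_closed r_inv r_one)
    finally show ?thesis unfolding R_def .
  qed
  define rep where "rep = (\<lambda>x. SOME y. y \<in> K \<and> R x y)"
  have rep: "rep x \<in> K \<and> R x (rep x)" if "x \<in> K" for x
    unfolding rep_def by (rule someI[of _ x]) (use that KG refl in auto)
  have rep_eq: "rep x = rep y" if "x \<in> K" "y \<in> K" "R x y" for x y
  proof -
    have "{z. z \<in> K \<and> R x z} = {z. z \<in> K \<and> R y z}"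
      using that KG sym trans by blast
    then show ?thesis unfolding rep_def by (metis mem_Collect_eq)
  qed
  obtain ts where ts: "distinct ts" "set ts = rep ` K"
    using finite_distinct_list[of "rep ` K"] fin by blast
  have "left_transversal G K H ts"
    unfolding left_transversal_def
  proof (intro conjI ballI)
    show "set ts \<subseteq> K" using ts rep by auto
    fix k assume k: "k \<in> K"
    obtain i where i: "i < length ts" "ts ! i = rep k"
      using ts k by (metis imageI in_set_conv_nth)
    have "R (rep k) k" using rep[OF k] sym KG k by blast
    then have ex: "inv (ts ! i) \<otimes> k \<in> H" using i unfolding R_def by simp
    show "\<exists>!i. i < length ts \<and> inv (ts ! i) \<otimes> k \<in> H"
    proof (rule ex1I[of _ i])
      show "i < length ts \<and> inv (ts ! i) \<otimes> k \<in> H" using i ex by simp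
      fix j assume j: "j < length ts \<and> inv (ts ! j) \<otimes> k \<in> H"
      obtain a where a: "a \<in> K" "ts ! j = rep a" using j ts by (metis imageE nth_mem)
      have tjK: "ts ! j \<in> K" using a rep by auto
      have tiK: "ts ! i \<in> K" using i rep k by auto
      have "R (ts ! j) (ts ! i)"
        using j ex trans[of "ts ! j" k "ts ! i"] sym[of "ts ! i" k] KG tjK tiK k
        unfolding R_def by blast
      moreover have "R a (ts ! j)" using a rep by auto
      moreover have "R (ts ! i) k" using ex unfolding R_def .
      ultimately have "R a k" using trans KG a k tjK tiK by blast
      then have "rep a = rep k" using rep_eq a k by blast
      then have "ts ! j = ts ! i" using a i by simp
      then show "j = i" using ts(1) i j nth_eq_iff_index_eq by blast
    qed
  qed
  then show ?thesis by blast
qed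



lemma mult_entry:
  assumes "A \<in> carrier_mat a b" "B \<in> carrier_mat b c" "i < a" "j < c"
  shows "(A * B) $$ (i,j) = (\<Sum>s\<in>{0..<b}. A $$ (i,s) * B $$ (s,j))"
  using assms by (simp add: scalar_prod_def)

lemma block_sum:
  fixes f :: "nat \<Rightarrow> 'a::comm_monoid_add"
  assumes "j < m" and "\<And>s. s < m * n \<Longrightarrow> s div n \<noteq> j \<Longrightarrow> f s = 0"
  shows "(\<Sum>s\<in>{0..<m*n}. f s) = (\<Sum>b\<in>{0..<n}. f (j*n+b))"
proof -
  have sub: "(\<lambda>b. j*n+b) ` {0..<n} \<subseteq> {0..<m*n}"
  proof
    fix x assume "x \<in> (\<lambda>b. j*n+b) ` {0..<n}"
    then obtain b where b: "b < n" "x = j*n+b" by (auto simp del: image_add_atLeastLessThan)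
    have "j*n + b < (j+1)*n" using b by simp
    also have "\<dots> \<le> m*n" using assms(1) by (intro mult_right_mono) auto
    finally show "x \<in> {0..<m*n}" using b by simp
  qed
  have "(\<Sum>s\<in>{0..<m*n}. f s) = (\<Sum>s\<in>(\<lambda>b. j*n+b) ` {0..<n}. f s)"
  proof (rule sum.mono_neutral_right[OF _ sub])
    show "\<forall>i\<in>{0..<m * n} - (\<lambda>b. j * n + b) ` {0..<n}. f i = 0"
    proof
      fix s assume s: "s \<in> {0..<m * n} - (\<lambda>b. j * n + b) ` {0..<n}"
      have "s div n \<noteq> j"
      proof
        assume "s div n = j"
        then have "s = j*n + s mod n" by (metis div_mult_mod_eq add.commute mult.commute)
        moreover have "n > 0" using s by (cases n) auto
        ultimately show False using s by (metis atLeastLessThan_iff image_eqI mod_less_divisor zero_le Diff_iff)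
      qed
      then show "f s = 0" using assms(2) s by auto
    qed
  qed simp
  also have "\<dots> = (\<Sum>b\<in>{0..<n}. f (j*n+b))"
    by (subst sum.reindex) (auto simp: inj_on_def)
  finally show ?thesis .
qed

locale indsetup =
  fixes G :: "('g,'b) monoid_scheme" (structure) and K H :: "'g set" and n :: nat
    and S :: "'g \<Rightarrow> 'k::field mat"
  assumes grp: "group G" and KN: "K \<lhd> G" and HN: "H \<lhd> G" and HK: "H \<subseteq> K"
    and finK: "finite K" and rep: "is_rep G H n S"
begin

interpretation group G by (rule grp)

abbreviation "ts \<equiv> chosen_transversal G K H"
abbreviation "m \<equiv> length ts"
abbreviation "T \<equiv> ind_rep G K H n S"

lemma KG: "K \<subseteq> carrier G" using KN normal_imp_subgroup subgroup.subset by blast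
lemma HG: "H \<subseteq> carrier G" using HK KG by blast
lemma Hsg: "subgroup H G" using HN normal_imp_subgroup by blast
lemma Ksg: "subgroup K G" using KN normal_imp_subgroup by blast

lemma lt: "left_transversal G K H ts"
proof -
  have "\<exists>ts. left_transversal G K H ts" by (rule ex_transversal[OF grp Hsg KG finK])
  then show ?thesis unfolding chosen_transversal_def by (rule someI_ex)
qed

lemma tsK: "i < m \<Longrightarrow> ts ! i \<in> K" using lt unfolding left_transversal_def by auto
lemma tsG: "i < m \<Longrightarrow> ts ! i \<in> carrier G" using tsK KG by blast

lemma uniq: "k \<in> K \<Longrightarrow> i < m \<Longrightarrow> j < m \<Longrightarrow> inv (ts ! i) \<otimes> k \<in> H \<Longrightarrow> inv (ts ! j) \<otimes> k \<in> H \<Longrightarrow> i = j"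
  using lt unfolding left_transversal_def by blast

lemma exi: "k \<in> K \<Longrightarrow> \<exists>i<m. inv (ts ! i) \<otimes> k \<in> H"
  using lt unfolding left_transversal_def by blast

lemma HinvI: "x \<in> carrier G \<Longrightarrow> inv x \<in> H \<Longrightarrow> x \<in> H"
  using Hsg by (metis inv_inv subgroup.m_inv_closed)

lemma tt: "i < m \<Longrightarrow> j < m \<Longrightarrow> (inv (ts ! i) \<otimes> ts ! j \<in> H) = (i = j)"
proof
  assume "i < m" "j < m" "inv (ts ! i) \<otimes> ts ! j \<in> H"
  moreover have "inv (ts ! j) \<otimes> ts ! j \<in> H" using \<open>j < m\<close> tsG Hsg subgroup.one_closed by fastforce
  ultimately show "i = j" using uniq[of "ts ! j" i j] tsK by blast
next
  assume "i < m" "j < m" "i = j"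
  then show "inv (ts ! i) \<otimes> ts ! j \<in> H" using tsG Hsg subgroup.one_closed by fastforce
qed

lemma S_carrier: "g \<in> H \<Longrightarrow> S g \<in> carrier_mat n n" using rep unfolding is_rep_def by auto
lemma S_mult: "g \<in> H \<Longrightarrow> h \<in> H \<Longrightarrow> S (g \<otimes> h) = S g * S h" using rep unfolding is_rep_def by auto
lemma S_one: "S \<one> = 1\<^sub>m n" using rep unfolding is_rep_def by auto

lemma T_carrier: "T g \<in> carrier_mat (m*n) (m*n)"
  unfolding ind_rep_def by (simp add: Let_def)

lemma T_entry: "r < m*n \<Longrightarrow> c < m*n \<Longrightarrow> T g $$ (r,c) =
   (let x = inv (ts ! (r div n)) \<otimes> g \<otimes> ts ! (c div n) in if x \<in> H then S x $$ (r mod n, c mod n) else 0)"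
  unfolding ind_rep_def by (simp add: Let_def)

lemma div_lt: "r < m*n \<Longrightarrow> r div n < m"
  by (simp add: less_mult_imp_div_less)

end


context indsetup begin
interpretation group G by (rule grp)

lemma alg1: "a \<in> carrier G \<Longrightarrow> g \<in> carrier G \<Longrightarrow> b \<in> carrier G \<Longrightarrow>
  inv (inv a \<otimes> g \<otimes> b) = inv b \<otimes> (inv g \<otimes> a)"
  by (simp add: inv_mult_group m_assoc)

lemma bb: "b \<in> carrier G \<Longrightarrow> x \<in> carrier G \<Longrightarrow> b \<otimes> (inv b \<otimes> x) = x"
  by (simp add: m_assoc[symmetric])

lemma alg2: "a \<in> carrier G \<Longrightarrow> g \<in> carrier G \<Longrightarrow> b \<in> carrier G \<Longrightarrow> h \<in> carrier G \<Longrightarrow> c \<in> carrier G \<Longrightarrow>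
  (inv a \<otimes> g \<otimes> b) \<otimes> (inv b \<otimes> h \<otimes> c) = inv a \<otimes> (g \<otimes> h) \<otimes> c"
  by (simp add: m_assoc bb)

lemma T_dims: "dim_row (T g) = m*n" "dim_col (T g) = m*n"
  using carrier_matD[OF T_carrier] by auto

lemma T_one: "T \<one> = 1\<^sub>m (m*n)"
proof (rule eq_matI)
  show "dim_row (T \<one>) = dim_row (1\<^sub>m (m*n))" by (simp add: T_dims)
  show "dim_col (T \<one>) = dim_col (1\<^sub>m (m*n))" by (simp add: T_dims)
  fix r c assume "r < dim_row (1\<^sub>m (m*n))" "c < dim_col (1\<^sub>m (m*n))"
  then have r: "r < m*n" and c: "c < m*n" by simp_all
  have ri: "r div n < m" "c div n < m" using div_lt r c by auto
  have e: "inv (ts ! (r div n)) \<otimes> \<one> \<otimes> ts ! (c div n) = inv (ts ! (r div n)) \<otimes> ts ! (c div n)"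
    using tsG[OF ri(1)] tsG[OF ri(2)] by simp
  have npos: "n > 0" using r by (cases n) auto
  have ent: "T \<one> $$ (r,c) = (let x = inv (ts ! (r div n)) \<otimes> ts ! (c div n) in if x \<in> H then S x $$ (r mod n, c mod n) else 0)"
    using T_entry[OF r c, of \<one>] e by simp
  show "T \<one> $$ (r,c) = 1\<^sub>m (m*n) $$ (r,c)"
  proof (cases "r div n = c div n")
    case True
    have x1: "inv (ts ! (r div n)) \<otimes> ts ! (c div n) = \<one>" using True tsG[OF ri(1)] by simp
    have "(r = c) = (r mod n = c mod n)" using True by (metis div_mult_mod_eq)
    moreover have "r mod n < n" "c mod n < n" using npos by auto
    moreover have "\<one> \<in> H" using Hsg subgroup.one_closed by blast
    ultimately show ?thesis using ent x1 S_one r c by (simp add: Let_def)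
  next
    case False
    have "inv (ts ! (r div n)) \<otimes> ts ! (c div n) \<notin> H" using tt[OF ri] False by simp
    moreover have "r \<noteq> c" using False by auto
    ultimately show ?thesis using ent r c by (simp add: Let_def)
  qed
qed

lemma T_hom:
  assumes g: "g \<in> K" and h: "h \<in> K"
  shows "T (g \<otimes> h) = T g * T h"
proof (rule eq_matI)
  have gG: "g \<in> carrier G" and hG: "h \<in> carrier G" using g h KG by auto
  show "dim_row (T (g \<otimes> h)) = dim_row (T g * T h)" "dim_col (T (g \<otimes> h)) = dim_col (T g * T h)"
    by (simp_all add: T_dims)
  fix r c assume "r < dim_row (T g * T h)" "c < dim_col (T g * T h)"
  then have r: "r < m*n" and c: "c < m*n" by (simp_all add: T_dims)
  have npos: "n > 0" using r by (cases n) auto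
  define i where "i = r div n"
  define k where "k = c div n"
  have i: "i < m" using div_lt r i_def by simp
  have k: "k < m" using div_lt c k_def by simp
  have tiG: "ts ! i \<in> carrier G" using tsG i by simp
  have tkG: "ts ! k \<in> carrier G" using tsG k by simp
  have "inv g \<otimes> ts ! i \<in> K" using Ksg g tsK[OF i] by (simp add: subgroup.m_closed subgroup.m_inv_closed)
  then obtain j0 where j0: "j0 < m" "inv (ts ! j0) \<otimes> (inv g \<otimes> ts ! i) \<in> H" using exi by blast
  have tjG: "ts ! j0 \<in> carrier G" using tsG j0 by simp
  define a where "a = inv (ts ! i) \<otimes> g \<otimes> ts ! j0"
  have aG: "a \<in> carrier G" unfolding a_def using tiG tjG gG by simp
  have aH: "a \<in> H" using HinvI[OF aG] alg1[OF tiG gG tjG] j0 unfolding a_def by simp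
  have zero: "T g $$ (r,s) = 0" if s: "s < m*n" "s div n \<noteq> j0" for s
  proof -
    have sm: "s div n < m" using div_lt s by simp
    have "inv (ts ! i) \<otimes> g \<otimes> ts ! (s div n) \<notin> H"
    proof
      assume "inv (ts ! i) \<otimes> g \<otimes> ts ! (s div n) \<in> H"
      then have "inv (inv (ts ! i) \<otimes> g \<otimes> ts ! (s div n)) \<in> H"
        by (rule subgroup.m_inv_closed[OF Hsg])
      then have "inv (ts ! (s div n)) \<otimes> (inv g \<otimes> ts ! i) \<in> H"
        using alg1[OF tiG gG tsG[OF sm]] by simp
      then have "s div n = j0" by (rule uniq[OF \<open>inv g \<otimes> ts ! i \<in> K\<close> sm j0(1) _ j0(2)])
      then show False using s by simp
    qed
    then show ?thesis using T_entry[OF r s(1)] i_def by (simp add: Let_def)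
  qed
  have "(T g * T h) $$ (r,c) = (\<Sum>s\<in>{0..<m*n}. T g $$ (r,s) * T h $$ (s,c))"
    by (rule mult_entry[OF T_carrier T_carrier r c])
  also have "\<dots> = (\<Sum>b\<in>{0..<n}. T g $$ (r,j0*n+b) * T h $$ (j0*n+b,c))"
    by (rule block_sum[OF j0(1)]) (use zero in auto)
  also have "\<dots> = (\<Sum>b\<in>{0..<n}. S a $$ (r mod n, b) *
      (let a' = inv (ts ! j0) \<otimes> h \<otimes> ts ! k in if a' \<in> H then S a' $$ (b, c mod n) else 0))"
  proof (rule sum.cong[OF refl])
    fix b assume b: "b \<in> {0..<n}"
    have jb: "j0*n+b < m*n"
    proof -
      have "j0*n+b < (j0+1)*n" using b by simp
      also have "\<dots> \<le> m*n" using j0(1) by (intro mult_right_mono) auto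
      finally show ?thesis .
    qed
    have d: "(j0*n+b) div n = j0" "(j0*n+b) mod n = b" using b npos by auto
    show "T g $$ (r,j0*n+b) * T h $$ (j0*n+b,c) = S a $$ (r mod n, b) *
      (let a' = inv (ts ! j0) \<otimes> h \<otimes> ts ! k in if a' \<in> H then S a' $$ (b, c mod n) else 0)"
      using T_entry[OF r jb, of g] T_entry[OF jb c, of h] d aH
      by (simp add: Let_def a_def i_def k_def)
  qed
  also have "\<dots> = T (g \<otimes> h) $$ (r,c)"
  proof (cases "inv (ts ! j0) \<otimes> h \<otimes> ts ! k \<in> H")
    case True
    define a' where "a' = inv (ts ! j0) \<otimes> h \<otimes> ts ! k"
    have aa: "a \<otimes> a' = inv (ts ! i) \<otimes> (g \<otimes> h) \<otimes> ts ! k"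
      unfolding a_def a'_def by (rule alg2[OF tiG gG tjG hG tkG])
    have aaH: "a \<otimes> a' \<in> H" using subgroup.m_closed[OF Hsg aH True[folded a'_def]] .
    have "(\<Sum>b\<in>{0..<n}. S a $$ (r mod n, b) *
      (let a' = inv (ts ! j0) \<otimes> h \<otimes> ts ! k in if a' \<in> H then S a' $$ (b, c mod n) else 0))
      = (S a * S a') $$ (r mod n, c mod n)"
      using True npos by (simp add: a'_def Let_def mult_entry[OF S_carrier[OF aH] S_carrier[OF True]])
    also have "\<dots> = S (a \<otimes> a') $$ (r mod n, c mod n)" using S_mult aH True a'_def by simp
    also have "\<dots> = T (g \<otimes> h) $$ (r,c)"
      using T_entry[OF r c, of "g \<otimes> h"] aa aaH by (simp add: Let_def i_def k_def)
    finally show ?thesis .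
  next
    case False
    define a' where "a' = inv (ts ! j0) \<otimes> h \<otimes> ts ! k"
    have aa: "a \<otimes> a' = inv (ts ! i) \<otimes> (g \<otimes> h) \<otimes> ts ! k"
      unfolding a_def a'_def by (rule alg2[OF tiG gG tjG hG tkG])
    have a'G: "a' \<in> carrier G" unfolding a'_def using tjG hG tkG by simp
    have "a \<otimes> a' \<notin> H"
    proof
      assume "a \<otimes> a' \<in> H"
      then have "inv a \<otimes> (a \<otimes> a') \<in> H" using subgroup.m_closed[OF Hsg subgroup.m_inv_closed[OF Hsg aH]] by simp
      then have "a' \<in> H" using aG a'G by (simp add: m_assoc[symmetric])
      then show False using False a'_def by simp
    qed
    then show ?thesis using False T_entry[OF r c, of "g \<otimes> h"] aa by (simp add: Let_def i_def k_def)
  qed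
  finally show "T (g \<otimes> h) $$ (r,c) = (T g * T h) $$ (r,c)" by simp
qed

end


lemma mat_vec_zero: "A \<in> carrier_mat n m \<Longrightarrow> A *\<^sub>v 0\<^sub>v m = (0\<^sub>v n :: 'a::comm_ring_1 vec)"
  by (intro eq_vecI) (auto simp: scalar_prod_def)

lemma det_nz_invertible:
  fixes Q :: "'a::field mat"
  assumes Q: "Q \<in> carrier_mat n n" and d: "det Q \<noteq> 0"
  shows "invertible_mat Q"
proof -
  have "Q \<in> Units (ring_mat TYPE('a) n ())" by (rule det_non_zero_imp_unit[OF Q d])
  then obtain B where B: "B \<in> carrier_mat n n" "B * Q = 1\<^sub>m n" "Q * B = 1\<^sub>m n"
    unfolding Units_def ring_mat_def by auto
  show ?thesis unfolding invertible_mat_def inverts_mat_def square_mat.simps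
    using B Q by auto
qed

lemma schur:
  fixes G (structure) and Q :: "'k::field mat"
  assumes Q: "Q \<in> carrier_mat n n" and Qne: "Q \<noteq> 0\<^sub>m n n"
    and sr: "simple_rep G H n S"
    and inter: "\<And>h. h \<in> H \<Longrightarrow> \<exists>h'\<in>H. Q * S h = S h' * Q"
  shows "invertible_mat Q"
proof (rule det_nz_invertible[OF Q], rule notI)
  assume "det Q = 0"
  then obtain v where v: "v \<in> carrier_vec n" "v \<noteq> 0\<^sub>v n" "Q *\<^sub>v v = 0\<^sub>v n"
    using det_0_iff_vec_prod_zero_field[OF Q] by blast
  have Sc: "\<And>h. h \<in> H \<Longrightarrow> S h \<in> carrier_mat n n" using sr unfolding simple_rep_def is_rep_def by auto
  define W where "W = {u \<in> carrier_vec n. Q *\<^sub>v u = 0\<^sub>v n}"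
  have inv: "invariant_subspace H n S W"
    unfolding invariant_subspace_def
  proof (intro conjI ballI allI)
    show "W \<subseteq> carrier_vec n" unfolding W_def by auto
    show "0\<^sub>v n \<in> W" unfolding W_def using mat_vec_zero[OF Q] by auto
    fix u w assume u: "u \<in> W" and w: "w \<in> W"
    then show "u + w \<in> W" unfolding W_def using mult_add_distrib_mat_vec[OF Q] by auto
  next
    fix c u assume u: "u \<in> W"
    then show "c \<cdot>\<^sub>v u \<in> W" unfolding W_def using mult_mat_vec[OF Q] by auto
  next
    fix h u assume h: "h \<in> H" and u: "u \<in> W"
    obtain h' where h': "h' \<in> H" "Q * S h = S h' * Q" using inter[OF h] by blast
    have uc: "u \<in> carrier_vec n" using u W_def by auto
    have "Q *\<^sub>v (S h *\<^sub>v u) = (Q * S h) *\<^sub>v u" using Q Sc[OF h] uc by simp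
    also have "\<dots> = (S h' * Q) *\<^sub>v u" using h' by simp
    also have "\<dots> = S h' *\<^sub>v (Q *\<^sub>v u)" using Q Sc[OF h'(1)] uc by simp
    also have "\<dots> = 0\<^sub>v n" using u W_def mat_vec_zero[OF Sc[OF h'(1)]] by auto
    finally show "S h *\<^sub>v u \<in> W" unfolding W_def using Sc[OF h] uc by auto
  qed
  then have "W = {0\<^sub>v n} \<or> W = carrier_vec n" using sr unfolding simple_rep_def by blast
  moreover have "v \<in> W" using v W_def by auto
  ultimately have Wall: "W = carrier_vec n" using v by auto
  have "Q = 0\<^sub>m n n"
  proof (rule eq_matI)
    fix i j assume "i < dim_row (0\<^sub>m n n :: 'k mat)" "j < dim_col (0\<^sub>m n n :: 'k mat)"
    then have ij: "i < n" "j < n" by auto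
    have "unit_vec n j \<in> W" using Wall by simp
    then have "Q *\<^sub>v unit_vec n j = 0\<^sub>v n" unfolding W_def by auto
    then have "(Q *\<^sub>v unit_vec n j) $ i = 0" using ij by simp
    then show "Q $$ (i,j) = 0\<^sub>m n n $$ (i,j)" using ij Q by auto
  qed (use Q in auto)
  then show False using Qne by simp
qed



context indsetup begin
interpretation group G by (rule grp)

lemma conjK: "x \<in> K \<Longrightarrow> g \<in> K \<Longrightarrow> inv x \<otimes> g \<otimes> x \<in> K"
  using Ksg by (meson subgroup.m_closed subgroup.m_inv_closed)

lemma K_sub_inertia: "K \<subseteq> inertia G K (ind_dim G K H n) T"
proof
  fix x assume x: "x \<in> K"
  have xG: "x \<in> carrier G" using x KG by blast
  have ixK: "inv x \<in> K" by (rule subgroup.m_inv_closed[OF Ksg x])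
  have d: "ind_dim G K H n = m*n" unfolding ind_dim_def by simp
  have inv1: "T x * T (inv x) = 1\<^sub>m (m*n)"
    using T_hom[OF x ixK] T_one xG by simp
  have inv2: "T (inv x) * T x = 1\<^sub>m (m*n)"
    using T_hom[OF ixK x] T_one xG by simp
  have im: "invertible_mat (T x)"
    unfolding invertible_mat_def inverts_mat_def square_mat.simps
    using inv1 inv2 T_dims by auto
  have "\<forall>g\<in>K. T x * conj_rep G x T g = T g * T x"
  proof
    fix g assume g: "g \<in> K"
    have gG: "g \<in> carrier G" using g KG by blast
    have e: "x \<otimes> (inv x \<otimes> g \<otimes> x) = g \<otimes> x" using xG gG by (simp add: m_assoc bb)
    have "T x * conj_rep G x T g = T x * T (inv x \<otimes> g \<otimes> x)" unfolding conj_rep_def by simp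
    also have "\<dots> = T (x \<otimes> (inv x \<otimes> g \<otimes> x))" using T_hom[OF x conjK[OF x g]] by simp
    also have "\<dots> = T g * T x" using e T_hom[OF g x] by simp
    finally show "T x * conj_rep G x T g = T g * T x" .
  qed
  then show "x \<in> inertia G K (ind_dim G K H n) T"
    unfolding inertia_def rep_iso_def d using xG im T_carrier by blast
qed

lemma T_diag:
  assumes y: "y \<in> H" and r: "r < m*n" and c: "c < m*n"
  shows "T y $$ (r,c) = (if r div n = c div n
     then S (inv (ts ! (r div n)) \<otimes> y \<otimes> ts ! (r div n)) $$ (r mod n, c mod n) else 0)"
proof -
  have ri: "r div n < m" "c div n < m" using div_lt r c by auto
  define ti where "ti = ts ! (r div n)"
  define tj where "tj = ts ! (c div n)"
  have tiG: "ti \<in> carrier G" and tjG: "tj \<in> carrier G" using tsG ri ti_def tj_def by auto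
  have yG: "y \<in> carrier G" using y HG by blast
  have y1: "inv ti \<otimes> y \<otimes> ti \<in> H" using normal.inv_op_closed1[OF HN tiG y] .
  have y1G: "inv ti \<otimes> y \<otimes> ti \<in> carrier G" using tiG yG by simp
  have prod: "inv ti \<otimes> y \<otimes> tj = (inv ti \<otimes> y \<otimes> ti) \<otimes> (inv ti \<otimes> tj)"
    using tiG tjG yG by (simp add: m_assoc bb)
  have "(inv ti \<otimes> y \<otimes> tj \<in> H) = (inv ti \<otimes> tj \<in> H)"
  proof
    assume "inv ti \<otimes> y \<otimes> tj \<in> H"
    then have "inv (inv ti \<otimes> y \<otimes> ti) \<otimes> (inv ti \<otimes> y \<otimes> tj) \<in> H"
      using subgroup.m_closed[OF Hsg subgroup.m_inv_closed[OF Hsg y1]] by simp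
    also have "inv (inv ti \<otimes> y \<otimes> ti) \<otimes> (inv ti \<otimes> y \<otimes> tj) = inv ti \<otimes> tj"
      unfolding prod using y1G tiG tjG by (simp add: m_assoc[symmetric])
    finally show "inv ti \<otimes> tj \<in> H" .
  next
    assume "inv ti \<otimes> tj \<in> H"
    then show "inv ti \<otimes> y \<otimes> tj \<in> H" unfolding prod using subgroup.m_closed[OF Hsg y1] by simp
  qed
  then have "(inv ti \<otimes> y \<otimes> tj \<in> H) = (r div n = c div n)" using tt[OF ri] ti_def tj_def by simp
  then show ?thesis using T_entry[OF r c, of y] unfolding ti_def[symmetric] tj_def[symmetric]
    by (auto simp: Let_def ti_def tj_def)
qed

end


context indsetup begin
interpretation group G by (rule grp)

lemma bb2: "b \<in> carrier G \<Longrightarrow> x \<in> carrier G \<Longrightarrow> inv b \<otimes> (b \<otimes> x) = x"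
  by (simp add: m_assoc[symmetric])

lemma g1: "x \<in> carrier G \<Longrightarrow> t \<in> carrier G \<Longrightarrow> h \<in> carrier G \<Longrightarrow>
  inv t \<otimes> (inv x \<otimes> (x \<otimes> t \<otimes> h \<otimes> inv (x \<otimes> t)) \<otimes> x) \<otimes> t = h"
  by (simp add: m_assoc inv_mult_group bb bb2)

lemma g2: "x \<in> carrier G \<Longrightarrow> t \<in> carrier G \<Longrightarrow> s \<in> carrier G \<Longrightarrow> h \<in> carrier G \<Longrightarrow>
  inv t \<otimes> (inv x \<otimes> (s \<otimes> h \<otimes> inv s) \<otimes> x) \<otimes> t = inv (inv s \<otimes> x \<otimes> t) \<otimes> h \<otimes> (inv s \<otimes> x \<otimes> t)"
  by (simp add: m_assoc inv_mult_group bb bb2)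

lemma g3: "s \<in> carrier G \<Longrightarrow> h \<in> carrier G \<Longrightarrow> inv s \<otimes> (s \<otimes> h \<otimes> inv s) \<otimes> s = h"
  by (simp add: m_assoc inv_mult_group bb bb2)

lemma g4: "x \<in> carrier G \<Longrightarrow> t \<in> carrier G \<Longrightarrow> s \<in> carrier G \<Longrightarrow>
  s \<otimes> (inv s \<otimes> x \<otimes> t) \<otimes> inv t = x"
  by (simp add: m_assoc inv_mult_group bb bb2)


lemma kn_lt: "k < m \<Longrightarrow> a < n \<Longrightarrow> k*n+a < m*n"
proof -
  assume "k < m" "a < n"
  then have "k*n+a < (k+1)*n" by simp
  also have "\<dots> \<le> m*n" using \<open>k < m\<close> by (intro mult_right_mono) auto
  finally show ?thesis .
qed

lemma inertia_sub_K:
  assumes sr: "simple_rep G H n S" and IH: "inertia G H n S = H"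
  shows "inertia G K (ind_dim G K H n) T \<subseteq> K"
proof
  fix x assume "x \<in> inertia G K (ind_dim G K H n) T"
  then obtain P where xG: "x \<in> carrier G" and P: "P \<in> carrier_mat (m*n) (m*n)"
    and Pi: "invertible_mat P" and Pint: "\<And>g. g \<in> K \<Longrightarrow> P * T (inv x \<otimes> g \<otimes> x) = T g * P"
    unfolding inertia_def rep_iso_def ind_dim_def conj_rep_def by auto
  have npos: "n > 0" using sr unfolding simple_rep_def by auto
  have "\<one> \<in> K" using subgroup.one_closed[OF Ksg] .
  then obtain i0 where "i0 < m" using exi by blast
  then have mpos: "m > 0" by linarith
  define t0 where "t0 = ts ! 0"
  have t0G: "t0 \<in> carrier G" using tsG mpos t0_def by simp
  have t0K: "t0 \<in> K" using tsK mpos t0_def by simp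
  define Q where "Q = (\<lambda>k. mat n n (\<lambda>(a,b). P $$ (k*n+a, b)))"
  have Qc: "Q k \<in> carrier_mat n n" for k unfolding Q_def by simp
  have "\<exists>k<m. Q k \<noteq> 0\<^sub>m n n"
  proof (rule ccontr)
    assume "\<not> (\<exists>k<m. Q k \<noteq> 0\<^sub>m n n)"
    then have Q0: "\<And>k. k < m \<Longrightarrow> Q k = 0\<^sub>m n n" by blast
    have col0: "P $$ (r,0) = 0" if r: "r < m*n" for r
    proof -
      have "r div n < m" using div_lt r by simp
      then have "Q (r div n) $$ (r mod n, 0) = 0" using Q0 npos by simp
      moreover have "r div n * n + r mod n = r" by simp
      ultimately show ?thesis unfolding Q_def using npos by simp
    qed
    obtain B where B1: "P * B = 1\<^sub>m (dim_row P)" and B2: "B * P = 1\<^sub>m (dim_row B)"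
      using Pi unfolding invertible_mat_def inverts_mat_def by blast
    have dcB: "dim_col B = m*n" using arg_cong[OF B1, of dim_col] P by simp
    have drB: "dim_row B = m*n" using arg_cong[OF B2, of dim_col] P by simp
    have Bc: "B \<in> carrier_mat (m*n) (m*n)" using dcB drB by auto
    have mn: "0 < m*n" using mpos npos by simp
    have "(B * P) $$ (0,0) = (\<Sum>s\<in>{0..<m*n}. B $$ (0,s) * P $$ (s,0))"
      by (rule mult_entry[OF Bc P mn mn])
    also have "\<dots> = 0" using col0 by simp
    finally have "(B * P) $$ (0,0) = 0" .
    moreover have "(B * P) $$ (0,0) = 1" using B2 drB mn by simp
    ultimately show False by simp
  qed
  then obtain k where k: "k < m" and Qne: "Q k \<noteq> 0\<^sub>m n n" by blast
  define tk where "tk = ts ! k"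
  have tkG: "tk \<in> carrier G" using tsG k tk_def by simp
  have tkK: "tk \<in> K" using tsK k tk_def by simp
  have twine: "Q k * S (inv t0 \<otimes> (inv x \<otimes> g \<otimes> x) \<otimes> t0) = S (inv tk \<otimes> g \<otimes> tk) * Q k"
    if g: "g \<in> H" for g
  proof -
    define y where "y = inv x \<otimes> g \<otimes> x"
    have yH: "y \<in> H" unfolding y_def using normal.inv_op_closed1[OF HN xG g] .
    have gK: "g \<in> K" using g HK by blast
    have eq: "P * T y = T g * P" using Pint[OF gK] y_def by simp
    have yt: "inv t0 \<otimes> y \<otimes> t0 \<in> H" using normal.inv_op_closed1[OF HN t0G yH] .
    have gt: "inv tk \<otimes> g \<otimes> tk \<in> H" using normal.inv_op_closed1[OF HN tkG g] .
    show ?thesis unfolding y_def[symmetric]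
    proof (rule eq_matI)
      show "dim_row (Q k * S (inv t0 \<otimes> y \<otimes> t0)) = dim_row (S (inv tk \<otimes> g \<otimes> tk) * Q k)"
        using S_carrier[OF gt] Qc[of k] by simp
      show "dim_col (Q k * S (inv t0 \<otimes> y \<otimes> t0)) = dim_col (S (inv tk \<otimes> g \<otimes> tk) * Q k)"
        using S_carrier[OF yt] Qc[of k] by simp
      fix a c assume "a < dim_row (S (inv tk \<otimes> g \<otimes> tk) * Q k)" "c < dim_col (S (inv tk \<otimes> g \<otimes> tk) * Q k)"
      then have a: "a < n" and c: "c < n" using S_carrier[OF gt] Qc[of k] by auto
      have r: "k*n+a < m*n" using kn_lt[OF k a] .
      have cm: "c < m*n" using kn_lt[OF mpos c] by simp
      have rdm: "(k*n+a) div n = k" "(k*n+a) mod n = a" using a by auto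
      have cdm: "c div n = 0" "c mod n = c" using c by auto
      have "(Q k * S (inv t0 \<otimes> y \<otimes> t0)) $$ (a,c) = (\<Sum>b\<in>{0..<n}. Q k $$ (a,b) * S (inv t0 \<otimes> y \<otimes> t0) $$ (b,c))"
        by (rule mult_entry[OF Qc S_carrier[OF yt] a c])
      also have "\<dots> = (\<Sum>b\<in>{0..<n}. P $$ (k*n+a, 0*n+b) * T y $$ (0*n+b, c))"
      proof (rule sum.cong[OF refl])
        fix b assume b: "b \<in> {0..<n}"
        have bm: "b < m*n" using kn_lt[OF mpos, of b] b by simp
        show "Q k $$ (a,b) * S (inv t0 \<otimes> y \<otimes> t0) $$ (b,c) = P $$ (k*n+a, 0*n+b) * T y $$ (0*n+b, c)"
          using T_diag[OF yH bm cm] b a cdm unfolding Q_def t0_def by simp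
      qed
      also have "\<dots> = (\<Sum>s\<in>{0..<m*n}. P $$ (k*n+a, s) * T y $$ (s, c))"
        by (rule block_sum[OF mpos, symmetric]) (simp add: T_diag[OF yH _ cm] cdm)
      also have "\<dots> = (P * T y) $$ (k*n+a, c)"
        by (rule mult_entry[OF P T_carrier r cm, symmetric])
      also have "\<dots> = (T g * P) $$ (k*n+a, c)" using eq by simp
      also have "\<dots> = (\<Sum>s\<in>{0..<m*n}. T g $$ (k*n+a, s) * P $$ (s, c))"
        by (rule mult_entry[OF T_carrier P r cm])
      also have "\<dots> = (\<Sum>b\<in>{0..<n}. T g $$ (k*n+a, k*n+b) * P $$ (k*n+b, c))"
        by (rule block_sum[OF k]) (simp add: T_diag[OF g r] rdm)
      also have "\<dots> = (\<Sum>b\<in>{0..<n}. S (inv tk \<otimes> g \<otimes> tk) $$ (a,b) * Q k $$ (b,c))"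
      proof (rule sum.cong[OF refl])
        fix b assume b: "b \<in> {0..<n}"
        have bm: "k*n+b < m*n" using kn_lt[OF k, of b] b by simp
        have bdm: "(k*n+b) div n = k" "(k*n+b) mod n = b" using b by auto
        show "T g $$ (k*n+a, k*n+b) * P $$ (k*n+b, c) = S (inv tk \<otimes> g \<otimes> tk) $$ (a,b) * Q k $$ (b,c)"
          using T_diag[OF g r bm] rdm bdm b c unfolding Q_def tk_def by simp
      qed
      also have "\<dots> = (S (inv tk \<otimes> g \<otimes> tk) * Q k) $$ (a,c)"
        by (rule mult_entry[OF S_carrier[OF gt] Qc a c, symmetric])
      finally show "(Q k * S (inv t0 \<otimes> y \<otimes> t0)) $$ (a,c) = (S (inv tk \<otimes> g \<otimes> tk) * Q k) $$ (a,c)" .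
    qed
  qed
  have Qinv: "invertible_mat (Q k)"
  proof (rule schur[OF Qc Qne sr])
    fix h assume h: "h \<in> H"
    have hG: "h \<in> carrier G" using h HG by blast
    have xtG: "x \<otimes> t0 \<in> carrier G" using xG t0G by simp
    define g where "g = x \<otimes> t0 \<otimes> h \<otimes> inv (x \<otimes> t0)"
    have gH: "g \<in> H" unfolding g_def using normal.inv_op_closed2[OF HN xtG h] .
    have "inv t0 \<otimes> (inv x \<otimes> g \<otimes> x) \<otimes> t0 = h" unfolding g_def using g1[OF xG t0G hG] .
    then have "Q k * S h = S (inv tk \<otimes> g \<otimes> tk) * Q k" using twine[OF gH] by simp
    moreover have "inv tk \<otimes> g \<otimes> tk \<in> H" using normal.inv_op_closed1[OF HN tkG gH] .
    ultimately show "\<exists>h'\<in>H. Q k * S h = S h' * Q k" by blast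
  qed
  define z where "z = inv tk \<otimes> x \<otimes> t0"
  have zG: "z \<in> carrier G" unfolding z_def using tkG xG t0G by simp
  have "\<forall>h\<in>H. Q k * conj_rep G z S h = S h * Q k"
  proof
    fix h assume h: "h \<in> H"
    have hG: "h \<in> carrier G" using h HG by blast
    define g where "g = tk \<otimes> h \<otimes> inv tk"
    have gH: "g \<in> H" unfolding g_def using normal.inv_op_closed2[OF HN tkG h] .
    have e1: "inv t0 \<otimes> (inv x \<otimes> g \<otimes> x) \<otimes> t0 = inv z \<otimes> h \<otimes> z"
      unfolding g_def z_def using g2[OF xG t0G tkG hG] .
    have e2: "inv tk \<otimes> g \<otimes> tk = h" unfolding g_def using g3[OF tkG hG] .
    show "Q k * conj_rep G z S h = S h * Q k"
      using twine[OF gH] e1 e2 unfolding conj_rep_def by simp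
  qed
  then have "z \<in> inertia G H n S"
    unfolding inertia_def rep_iso_def using zG Qc Qinv by blast
  then have zK: "z \<in> K" using IH HK by blast
  have "x = tk \<otimes> z \<otimes> inv t0" unfolding z_def using g4[OF xG t0G tkG] by simp
  moreover have "tk \<otimes> z \<otimes> inv t0 \<in> K"
    using subgroup.m_closed[OF Ksg subgroup.m_closed[OF Ksg tkK zK] subgroup.m_inv_closed[OF Ksg t0K]] .
  ultimately show "x \<in> K" by simp
qed

lemma inertia_eq:
  assumes sr: "simple_rep G H n S" and IH: "inertia G H n S = H"
  shows "inertia G K (ind_dim G K H n) T = K"
  using inertia_sub_K[OF sr IH] K_sub_inertia by blast

end

theorem mainTheorem15:
  fixes G :: "('g, 'b) monoid_scheme" (structure)
    and G1 H1 H2 :: "'g set" and p n :: nat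
    and S :: "'g \<Rightarrow> 'k :: {alg_closed_field, field_char_0} mat"
  assumes "group G" and "finite (carrier G)"
    and "prime p" and "\<exists>k. card (carrier G) = p ^ k"
    and "G1 \<lhd> G" and "H2 \<lhd> G" and "H1 = G1 \<inter> H2" and "H1 \<lhd> G"
    and "G1 <#> H2 = carrier G"
    and "card (carrier G) = p * card G1" and "card H2 = p * card H1"
    and "simple_rep G H1 n S"
    and "inertia G H1 n S = H1"
  shows "inertia G H2 (ind_dim G H2 H1 n) (ind_rep G H2 H1 n S) = H2
       \<and> inertia G G1 (ind_dim G G1 H1 n) (ind_rep G G1 H1 n S) = G1"
proof
  have rep: "is_rep G H1 n S" using assms(12) unfolding simple_rep_def by blast
  have sub2: "H2 \<subseteq> carrier G" using assms(6) normal_imp_subgroup subgroup.subset by blast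
  have sub1: "G1 \<subseteq> carrier G" using assms(5) normal_imp_subgroup subgroup.subset by blast
  interpret I2: indsetup G H2 H1 n S
    unfolding indsetup_def
    by (intro conjI assms(1) assms(6) assms(8) rep finite_subset[OF sub2 assms(2)]) (simp add: assms(7))
  interpret I1: indsetup G G1 H1 n S
    unfolding indsetup_def
    by (intro conjI assms(1) assms(5) assms(8) rep finite_subset[OF sub1 assms(2)]) (simp add: assms(7))
  show "inertia G H2 (ind_dim G H2 H1 n) (ind_rep G H2 H1 n S) = H2"
    by (rule I2.inertia_eq[OF assms(12,13)])
  show "inertia G G1 (ind_dim G G1 H1 n) (ind_rep G G1 H1 n S) = G1"
    by (rule I1.inertia_eq[OF assms(12,13)])
qed

end
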